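(* Let $\alpha\in(0,1)$ and $0\le W_0\le\alpha$. Under the super-uniformity and independence assumptions of the context, the doubly-weighted GAI++ algorithm defined in the context satisfies, for every $T\in\mathbb N$, $$\mathbb E\left[\frac{V_u(T)+W(T)}{R_u(T)\vee 1}\right]\le\alpha .$$ Consequently, since $W(T)\ge0$, the penalty-weighted false discovery rate satisfies $\mathrm{FDR}_u(T)=\mathbb E\big[V_u(T)/(R_u(T)\vee1)\big]\le\alpha$ for all $T\in\mathbb N$.
   Context: Online testing setup: $p$-values $P_1,P_2,\dots\in[0,1]$ arrive one at a time; $\mathcal H^0\subseteq\mathbb N$ is the fixed set of true-null indices. Super-uniformity: for $t\in\mathcal H^0$, $\mathbb P(P_t\le x)\le x$ for all $x\in[0,1]$. Independence: for each $t\in\mathcal H^0$, $P_t$ is independent of $(P_s)_{s\ne t}$. $\mathcal F^t=\sigma(R_1,\dots,R_t)$; predictable means $\mathcal F^{t-1}$-measurable; monotone means a coordinatewise nondecreasing function of $(R_1,\dots,R_{t-1})$. Doubly-weighted GAI++: at each $t$ one chooses a test level $\alpha_t\ge0$, a prior weight $w_t>0$ and a penalty weight $u_t>0$, all three predictable and monotone, and rejects via $R_t=\mathbf 1\{P_t\le\alpha_t u_t w_t\}$. Let $\tau_1=\min\{t:R_t=1\}$ ($=\infty$ if no rejection). Wealth starts at $W(0)=W_0$ and updates as $W(t)=W(t-1)-\phi_t+R_t\psi_t$, where $\phi_t,\psi_t$ are predictable, $\phi_t\le W(t-1)$, and $$0\le\psi_t\le\min\Big\{\phi_t+u_tb_t,\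 \frac{\phi_t}{u_tw_t\alpha_t}+u_tb_t-u_t\Big\},\qquad b_t=\alpha-\frac{W_0}{u_t}\mathbf 1\{\tau_1>t-1\}$$ (with $\phi_t/(u_tw_t\alpha_t)=+\infty$ if $\alpha_t=0$). Define $V_u(T)=\sum_{t\le T}u_tR_t\mathbf 1\{t\in\mathcal H^0\}$ and $R_u(T)=\sum_{t\le T}u_tR_t$. *)

theory Defs
  imports "HOL-Probability.Probability"
begin

text \<open>Histories of rejections are functions nat => bool; index 0 is unused (always False),
  times start at 1. Given the realised p-value sequence p, test levels al (alpha_t),
  prior weights w (w_t) and penalty weights u (u_t) as functions of the history,
  rej_hist ... n is the history (R_1,...,R_n), False beyond n.\<close>

fun rej_hist :: "(nat \<Rightarrow> (nat \<Rightarrow> bool) \<Rightarrow> real) \<Rightarrow> (nat \<Rightarrow> (nat \<Rightarrow> bool) \<Rightarrow> real)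
    \<Rightarrow> (nat \<Rightarrow> (nat \<Rightarrow> bool) \<Rightarrow> real) \<Rightarrow> (nat \<Rightarrow> real) \<Rightarrow> nat \<Rightarrow> nat \<Rightarrow> bool" where
  "rej_hist al w u p 0 = (\<lambda>s. False)"
| "rej_hist al w u p (Suc n) =
     (rej_hist al w u p n)(Suc n :=
        p (Suc n) \<le> al (Suc n) (rej_hist al w u p n) * u (Suc n) (rej_hist al w u p n)
                     * w (Suc n) (rej_hist al w u p n))"

definition rej :: "(nat \<Rightarrow> (nat \<Rightarrow> bool) \<Rightarrow> real) \<Rightarrow> (nat \<Rightarrow> (nat \<Rightarrow> bool) \<Rightarrow> real)
    \<Rightarrow> (nat \<Rightarrow> (nat \<Rightarrow> bool) \<Rightarrow> real) \<Rightarrow> (nat \<Rightarrow> real) \<Rightarrow> nat \<Rightarrow> bool" where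
  "rej al w u p t = rej_hist al w u p t t"

definition no_rej_before :: "(nat \<Rightarrow> bool) \<Rightarrow> nat \<Rightarrow> bool" where
  "no_rej_before h t = (\<forall>s\<in>{1..<t}. \<not> h s)"

text \<open>b_t = alpha - W0 / u_t * 1{tau_1 > t-1}, evaluated on the history h = (R_1..R_(t-1))\<close>
definition b_coef :: "real \<Rightarrow> real \<Rightarrow> (nat \<Rightarrow> (nat \<Rightarrow> bool) \<Rightarrow> real) \<Rightarrow> nat \<Rightarrow> (nat \<Rightarrow> bool) \<Rightarrow> real" where
  "b_coef a W0 u t h = a - W0 / u t h * (if no_rej_before h t then 1 else 0)"

text \<open>Wealth W(n): phi_t and psi_t are predictable, i.e. functions of (R_1..R_(t-1)).\<close>
fun wealth :: "real \<Rightarrow> (nat \<Rightarrow> (nat \<Rightarrow> bool) \<Rightarrow> real) \<Rightarrow> (nat \<Rightarrow> (nat \<Rightarrow> bool) \<Rightarrow> real)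
    \<Rightarrow> (nat \<Rightarrow> (nat \<Rightarrow> bool) \<Rightarrow> real) \<Rightarrow> (nat \<Rightarrow> (nat \<Rightarrow> bool) \<Rightarrow> real)
    \<Rightarrow> (nat \<Rightarrow> (nat \<Rightarrow> bool) \<Rightarrow> real) \<Rightarrow> (nat \<Rightarrow> real) \<Rightarrow> nat \<Rightarrow> real" where
  "wealth W0 phi psi al w u p 0 = W0"
| "wealth W0 phi psi al w u p (Suc n) =
     wealth W0 phi psi al w u p n - phi (Suc n) (rej_hist al w u p n)
     + (if rej al w u p (Suc n) then psi (Suc n) (rej_hist al w u p n) else 0)"

definition V_u :: "nat set \<Rightarrow> (nat \<Rightarrow> (nat \<Rightarrow> bool) \<Rightarrow> real) \<Rightarrow> (nat \<Rightarrow> (nat \<Rightarrow> bool) \<Rightarrow> real)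
    \<Rightarrow> (nat \<Rightarrow> (nat \<Rightarrow> bool) \<Rightarrow> real) \<Rightarrow> (nat \<Rightarrow> real) \<Rightarrow> nat \<Rightarrow> real" where
  "V_u H0 al w u p T = (\<Sum>t\<in>{1..T}. if rej al w u p t \<and> t \<in> H0
                                     then u t (rej_hist al w u p (t - 1)) else 0)"

definition R_u :: "(nat \<Rightarrow> (nat \<Rightarrow> bool) \<Rightarrow> real) \<Rightarrow> (nat \<Rightarrow> (nat \<Rightarrow> bool) \<Rightarrow> real)
    \<Rightarrow> (nat \<Rightarrow> (nat \<Rightarrow> bool) \<Rightarrow> real) \<Rightarrow> (nat \<Rightarrow> real) \<Rightarrow> nat \<Rightarrow> real" where
  "R_u al w u p T = (\<Sum>t\<in>{1..T}. if rej al w u p t then u t (rej_hist al w u p (t - 1)) else 0)"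

text \<open>Monotone (and predictable): depends only on h 1..h (t-1), coordinatewise nondecreasing.\<close>
definition monotone_pred :: "(nat \<Rightarrow> (nat \<Rightarrow> bool) \<Rightarrow> real) \<Rightarrow> bool" where
  "monotone_pred f = (\<forall>t h h'. t \<ge> 1 \<longrightarrow> (\<forall>s\<in>{1..<t}. h s \<longrightarrow> h' s) \<longrightarrow> f t h \<le> f t h')"

end

theory Submission
  imports Defs
begin


lemma rh_supp: "rej_hist al w u p n s \<Longrightarrow> 1 \<le> s \<and> s \<le> n"
proof (induction n arbitrary: s)
  case (Suc n)
  show ?case
  proof (cases "s = Suc n")
    case False
    then have "rej_hist al w u p n s" using Suc.prems by simp
    then show ?thesis using Suc.IH[of s] by simp
  qed simp
qed simp

lemma rh_char: "rej_hist al w u p n s = (1 \<le> s \<and> s \<le> n \<and> rej al w u p s)"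
proof (induction n arbitrary: s)
  case 0 then show ?case by simp
next
  case (Suc n)
  show ?case
  proof (cases "s = Suc n")
    case True then show ?thesis unfolding True rej_def by (simp del: rej_hist.simps)
  next
    case False
    have "rej_hist al w u p (Suc n) s = rej_hist al w u p n s"
      by (simp only: rej_hist.simps fun_upd_other[OF False])
    then show ?thesis using Suc.IH[of s] False by auto
  qed
qed

definition restr :: "nat \<Rightarrow> (nat \<Rightarrow> bool) \<Rightarrow> nat \<Rightarrow> bool" where
  "restr n h = (\<lambda>s. 1 \<le> s \<and> s \<le> n \<and> h s)"

lemma rh_restr: "n \<le> T \<Longrightarrow> rej_hist al w u p n = restr n (rej_hist al w u p T)"
  unfolding restr_def by (rule ext) (auto simp: rh_char)

lemma rej_T: "1 \<le> t \<Longrightarrow> t \<le> T \<Longrightarrow> rej al w u p t = rej_hist al w u p T t"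
  using rh_char[of al w u p T t] by blast

lemma rej_Suc: "rej al w u p (Suc n) = (p (Suc n) \<le> al (Suc n) (rej_hist al w u p n) * u (Suc n) (rej_hist al w u p n)
                     * w (Suc n) (rej_hist al w u p n))"
  unfolding rej_def by (simp only: rej_hist.simps fun_upd_same)

lemma rh_local: "(\<forall>s\<in>{1..n}. p s = q s) \<Longrightarrow> rej_hist al w u p n = rej_hist al w u q n"
proof (induction n)
  case (Suc n)
  then have "rej_hist al w u p n = rej_hist al w u q n" and "p (Suc n) = q (Suc n)" by auto
  then show ?case by (simp only: rej_hist.simps)
qed simp

lemma rh_zero:
  assumes thr: "\<And>t h. t \<ge> 1 \<Longrightarrow> 0 \<le> al t h * u t h * w t h"
    and t1: "t \<ge> 1" and r: "rej al w u p t"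
  shows "rej_hist al w u (p(t:=0)) n = rej_hist al w u p n"
proof (induction n)
  case 0 then show ?case by simp
next
  case (Suc n)
  define TH where "TH = al (Suc n) (rej_hist al w u p n) * u (Suc n) (rej_hist al w u p n)
                     * w (Suc n) (rej_hist al w u p n)"
  have e1: "rej_hist al w u (p(t:=0)) (Suc n) = (rej_hist al w u p n)(Suc n := (p(t:=0)) (Suc n) \<le> TH)"
    unfolding TH_def by (simp only: rej_hist.simps Suc.IH)
  have e2: "rej_hist al w u p (Suc n) = (rej_hist al w u p n)(Suc n := p (Suc n) \<le> TH)"
    unfolding TH_def by (simp only: rej_hist.simps)
  have "((p(t:=0)) (Suc n) \<le> TH) = (p (Suc n) \<le> TH)"
  proof (cases "Suc n = t")
    case True
    have "p (Suc n) \<le> TH" using r True rej_Suc unfolding TH_def by metis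
    moreover have "0 \<le> TH" unfolding TH_def using thr by simp
    ultimately show ?thesis using True by simp
  qed simp
  then show ?case by (simp only: e1 e2)
qed

lemma monoD: "monotone_pred f \<Longrightarrow> 1 \<le> t \<Longrightarrow> (\<forall>s\<in>{1..<t}. h s \<longrightarrow> h' s) \<Longrightarrow> f t h \<le> f t h'"
  unfolding monotone_pred_def by blast

lemma rh_mono:
  assumes nn: "\<And>t h. t \<ge> 1 \<Longrightarrow> 0 \<le> al t h" "\<And>t h. t \<ge> 1 \<Longrightarrow> 0 \<le> w t h" "\<And>t h. t \<ge> 1 \<Longrightarrow> 0 \<le> u t h"
    and m: "monotone_pred al" "monotone_pred w" "monotone_pred u"
    and le: "\<And>s. s \<ge> 1 \<Longrightarrow> q s \<le> p s"
  shows "rej_hist al w u p n s \<Longrightarrow> rej_hist al w u q n s"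
proof (induction n arbitrary: s)
  case 0 then show ?case by simp
next
  case (Suc n)
  let ?hp = "rej_hist al w u p n" and ?hq = "rej_hist al w u q n"
  have H: "\<forall>s\<in>{1..<Suc n}. ?hp s \<longrightarrow> ?hq s" using Suc.IH by blast
  have a: "al (Suc n) ?hp \<le> al (Suc n) ?hq" using monoD[OF m(1) _ H] by simp
  have b: "w (Suc n) ?hp \<le> w (Suc n) ?hq" using monoD[OF m(2) _ H] by simp
  have c: "u (Suc n) ?hp \<le> u (Suc n) ?hq" using monoD[OF m(3) _ H] by simp
  have "al (Suc n) ?hp * u (Suc n) ?hp * w (Suc n) ?hp \<le> al (Suc n) ?hq * u (Suc n) ?hq * w (Suc n) ?hq"
  proof -
    have f1: "0 \<le> al (Suc n) ?hq" "0 \<le> u (Suc n) ?hp" "0 \<le> w (Suc n) ?hp" "0 \<le> u (Suc n) ?hq"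
      using nn by auto
    have g: "al (Suc n) ?hp * u (Suc n) ?hp \<le> al (Suc n) ?hq * u (Suc n) ?hq"
      by (rule mult_mono[OF a c f1(1) f1(2)])
    have "0 \<le> al (Suc n) ?hq * u (Suc n) ?hq" using f1 by simp
    then show ?thesis by (rule mult_mono[OF g b _ f1(3)])
  qed
  note th = this
  show ?case
  proof (cases "s = Suc n")
    case True
    have "p (Suc n) \<le> al (Suc n) ?hp * u (Suc n) ?hp * w (Suc n) ?hp"
      using Suc.prems True by (simp only: rej_hist.simps fun_upd_same)
    then have "q (Suc n) \<le> al (Suc n) ?hq * u (Suc n) ?hq * w (Suc n) ?hq"
      using th le[of "Suc n"] by linarith
    then show ?thesis using True by (simp only: rej_hist.simps fun_upd_same)
  next
    case False
    then have "?hp s" using Suc.prems by (simp only: rej_hist.simps fun_upd_other[OF False])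
    then have "?hq s" by (rule Suc.IH)
    then show ?thesis using False by (simp only: rej_hist.simps fun_upd_other[OF False])
  qed
qed



lemma upd_eq: "f x = False \<Longrightarrow> (f(x:=v) = h) = (f = h(x:=False) \<and> v = h x)"
  by (auto simp: fun_eq_iff)

lemma finite_Hs: "finite {h::nat\<Rightarrow>bool. \<forall>s. h s \<longrightarrow> s \<in> {1..n}}"
proof (rule finite_subset)
  show "{h::nat\<Rightarrow>bool. \<forall>s. h s \<longrightarrow> s \<in> {1..n}} \<subseteq> (\<lambda>A s. s \<in> A) ` Pow {1..n}"
  proof
    fix h :: "nat \<Rightarrow> bool" assume "h \<in> {h. \<forall>s. h s \<longrightarrow> s \<in> {1..n}}"
    then have "{s. h s} \<in> Pow {1..n}" and "h = (\<lambda>s. s \<in> {s. h s})" by auto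
    then show "h \<in> (\<lambda>A s. s \<in> A) ` Pow {1..n}" by blast
  qed
qed simp

lemma rh_in_Hs: "rej_hist al w u p n \<in> {h. \<forall>s. h s \<longrightarrow> s \<in> {1..n}}"
  using rh_supp by fastforce

lemma rh_Suc_eq: "(rej_hist al w u p (Suc n) = h) = (rej_hist al w u p n = h(Suc n := False) \<and>
   (p (Suc n) \<le> al (Suc n) (h(Suc n:=False)) * u (Suc n) (h(Suc n:=False)) * w (Suc n) (h(Suc n:=False))) = h (Suc n))"
proof -
  define f where "f = rej_hist al w u p n"
  have f0: "f (Suc n) = False" unfolding f_def using rh_supp by fastforce
  have "(rej_hist al w u p (Suc n) = h) = (f(Suc n := p (Suc n) \<le> al (Suc n) f * u (Suc n) f * w (Suc n) f) = h)"
    unfolding f_def by (simp only: rej_hist.simps)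
  also have "\<dots> = (f = h(Suc n := False) \<and> (p (Suc n) \<le> al (Suc n) f * u (Suc n) f * w (Suc n) f) = h (Suc n))"
    by (rule upd_eq[of f "Suc n", OF f0])
  also have "\<dots> = (f = h(Suc n := False) \<and>
   (p (Suc n) \<le> al (Suc n) (h(Suc n:=False)) * u (Suc n) (h(Suc n:=False)) * w (Suc n) (h(Suc n:=False))) = h (Suc n))"
    by blast
  finally show ?thesis unfolding f_def .
qed

lemma rh_sets:
  assumes sa: "sigma_algebra (space M) S"
    and Q: "\<And>s x. s \<ge> 1 \<Longrightarrow> {\<omega>\<in>space M. Q s \<omega> \<le> x} \<in> S"
  shows "{\<omega>\<in>space M. rej_hist al w u (\<lambda>s. Q s \<omega>) n = h} \<in> S"
proof -
  interpret sigma_algebra "space M" S by (rule sa)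
  show ?thesis
  proof (induction n arbitrary: h)
    case 0
    show ?case
    proof (cases "(\<lambda>s. False) = h")
      case True
      then have e: "{\<omega>\<in>space M. rej_hist al w u (\<lambda>s. Q s \<omega>) 0 = h} = space M" by auto
      show ?thesis by (subst e) (rule top)
    next
      case False
      then have e: "{\<omega>\<in>space M. rej_hist al w u (\<lambda>s. Q s \<omega>) 0 = h} = {}" by auto
      show ?thesis by (subst e) (rule empty_sets)
    qed
  next
    case (Suc n)
    define h0 where "h0 = h(Suc n := False)"
    define TH where "TH = al (Suc n) h0 * u (Suc n) h0 * w (Suc n) h0"
    define C where "C = {\<omega>\<in>space M. Q (Suc n) \<omega> \<le> TH}"
    have C: "C \<in> S" unfolding C_def by (rule Q) simp
    have eq: "{\<omega>\<in>space M. rej_hist al w u (\<lambda>s. Q s \<omega>) (Suc n) = h}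
      = {\<omega>\<in>space M. rej_hist al w u (\<lambda>s. Q s \<omega>) n = h0} \<inter> (if h (Suc n) then C else space M - C)"
    proof -
      have "{\<omega>\<in>space M. rej_hist al w u (\<lambda>s. Q s \<omega>) (Suc n) = h}
         = {\<omega>\<in>space M. rej_hist al w u (\<lambda>s. Q s \<omega>) n = h0 \<and> (Q (Suc n) \<omega> \<le> TH) = h (Suc n)}"
        unfolding h0_def TH_def by (simp only: rh_Suc_eq)
      also have "\<dots> = {\<omega>\<in>space M. rej_hist al w u (\<lambda>s. Q s \<omega>) n = h0} \<inter> (if h (Suc n) then C else space M - C)"
        unfolding C_def by auto
      finally show ?thesis .
    qed
    have "{\<omega>\<in>space M. rej_hist al w u (\<lambda>s. Q s \<omega>) n = h0} \<inter> (if h (Suc n) then C else space M - C) \<in> S"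
      using Suc.IH[of h0] C by auto
    then show ?case by (simp only: eq)
  qed
qed

lemma ind_sum_int:
  fixes f :: "'a \<Rightarrow> real"
  assumes fm: "finite_measure M" and fin: "finite S" and A: "\<And>k. k \<in> S \<Longrightarrow> A k \<in> sets M"
    and f: "\<And>\<omega>. \<omega> \<in> space M \<Longrightarrow> f \<omega> = (\<Sum>k\<in>S. c k * indicator (A k) \<omega>)"
  shows "integrable M f \<and> integral\<^sup>L M f = (\<Sum>k\<in>S. c k * measure M (A k))"
proof -
  have i: "integrable M (\<lambda>\<omega>. c k * indicator (A k) \<omega>)" if "k \<in> S" for k
    using A[OF that] finite_measure.emeasure_finite[OF fm, of "A k"]
    by (intro integrable_mult_right integrable_real_indicator) (auto simp: less_top)
  have I: "integrable M (\<lambda>\<omega>. \<Sum>k\<in>S. c k * indicator (A k) \<omega>)" by (rule Bochner_Integration.integrable_sum) (rule i)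
  have "integrable M f = integrable M (\<lambda>\<omega>. \<Sum>k\<in>S. c k * indicator (A k) \<omega>)"
    by (rule Bochner_Integration.integrable_cong[OF refl]) (rule f)
  with I have "integrable M f" by simp
  moreover have "integral\<^sup>L M f = integral\<^sup>L M (\<lambda>\<omega>. \<Sum>k\<in>S. c k * indicator (A k) \<omega>)"
    using f by (intro Bochner_Integration.integral_cong) auto
  moreover have "\<dots> = (\<Sum>k\<in>S. integral\<^sup>L M (\<lambda>\<omega>. c k * indicator (A k) \<omega>))"
    by (rule Bochner_Integration.integral_sum) (rule i)
  moreover have "\<dots> = (\<Sum>k\<in>S. c k * measure M (A k))"
  proof (rule sum.cong)
    fix k assume k: "k \<in> S"
    have "A k \<inter> space M = A k" using A[OF k] sets.sets_into_space by blast
    then show "integral\<^sup>L M (\<lambda>\<omega>. c k * indicator (A k) \<omega>) = c k * measure M (A k)" by simp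
  qed simp
  ultimately show ?thesis by simp
qed

lemma fn_int:
  fixes g :: "'b \<Rightarrow> real"
  assumes fm: "finite_measure M" and fin: "finite S" and K: "\<And>\<omega>. \<omega> \<in> space M \<Longrightarrow> K \<omega> \<in> S"
    and Km: "\<And>k. k \<in> S \<Longrightarrow> {\<omega>\<in>space M. K \<omega> = k} \<in> sets M"
  shows "integrable M (\<lambda>\<omega>. g (K \<omega>))"
proof -
  have "integrable M (\<lambda>\<omega>. g (K \<omega>)) \<and> integral\<^sup>L M (\<lambda>\<omega>. g (K \<omega>)) = (\<Sum>k\<in>S. g k * measure M {\<omega>\<in>space M. K \<omega> = k})"
  proof (rule ind_sum_int[OF fm fin Km])
    fix \<omega> assume w: "\<omega> \<in> space M"
    have "(\<Sum>k\<in>S. g k * indicator {\<omega>\<in>space M. K \<omega> = k} \<omega>) = (\<Sum>k\<in>S. if K \<omega> = k then g k else 0)"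
      using w by (intro sum.cong) (auto simp: indicator_def)
    also have "\<dots> = g (K \<omega>)" using K[OF w] fin by simp
    finally show "g (K \<omega>) = (\<Sum>k\<in>S. g k * indicator {\<omega>\<in>space M. K \<omega> = k} \<omega>)" by simp
  qed
  then show ?thesis by blast
qed



lemma core:
  fixes Pt :: "'a \<Rightarrow> real" and F G :: "'b \<Rightarrow> real"
  assumes ps: "prob_space M"
    and ind: "prob_space.indep_set M A B"
    and PA: "\<And>x. {\<omega>\<in>space M. Pt \<omega> \<le> x} \<in> A"
    and fin: "finite S" and K: "\<And>\<omega>. \<omega>\<in>space M \<Longrightarrow> K \<omega> \<in> S"
    and KB: "\<And>k. k\<in>S \<Longrightarrow> {\<omega>\<in>space M. K \<omega> = k} \<in> B"
    and su: "\<And>x. 0 \<le> x \<Longrightarrow> x \<le> 1 \<Longrightarrow> measure M {\<omega>\<in>space M. Pt \<omega> \<le> x} \<le> x"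
    and F: "\<And>k. 0 \<le> F k" and G: "\<And>k. 0 \<le> G k"
  shows "integrable M (\<lambda>\<omega>. if Pt \<omega> \<le> F (K \<omega>) then G (K \<omega>) else 0)"
   and "integrable M (\<lambda>\<omega>. F (K \<omega>) * G (K \<omega>))"
   and "(\<integral>\<omega>. (if Pt \<omega> \<le> F (K \<omega>) then G (K \<omega>) else 0) \<partial>M) \<le> (\<integral>\<omega>. F (K \<omega>) * G (K \<omega>) \<partial>M)"
proof -
  interpret prob_space M by (rule ps)
  have fm: "finite_measure M" by (rule finite_measure_axioms)
  define Cs where "Cs k = {\<omega>\<in>space M. Pt \<omega> \<le> F k}" for k
  define Ds where "Ds k = {\<omega>\<in>space M. K \<omega> = k}" for k
  have CA: "Cs k \<in> A" for k unfolding Cs_def by (rule PA)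
  have DB: "k \<in> S \<Longrightarrow> Ds k \<in> B" for k unfolding Ds_def by (rule KB)
  have Cev: "Cs k \<in> events" for k using CA indep_setD_ev1[OF ind] by blast
  have Dev: "k \<in> S \<Longrightarrow> Ds k \<in> events" for k using DB indep_setD_ev2[OF ind] by blast
  have L: "integrable M (\<lambda>\<omega>. if Pt \<omega> \<le> F (K \<omega>) then G (K \<omega>) else 0) \<and>
    integral\<^sup>L M (\<lambda>\<omega>. if Pt \<omega> \<le> F (K \<omega>) then G (K \<omega>) else 0) = (\<Sum>k\<in>S. G k * prob (Cs k \<inter> Ds k))"
  proof (rule ind_sum_int[OF fm fin])
    fix k assume "k \<in> S" then show "Cs k \<inter> Ds k \<in> events" using Cev Dev by blast
  next
    fix \<omega> assume w: "\<omega> \<in> space M"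
    have "(\<Sum>k\<in>S. G k * indicator (Cs k \<inter> Ds k) \<omega>) = (\<Sum>k\<in>S. if K \<omega> = k then (if Pt \<omega> \<le> F k then G k else 0) else 0)"
      using w by (intro sum.cong) (auto simp: indicator_def Cs_def Ds_def)
    also have "\<dots> = (if Pt \<omega> \<le> F (K \<omega>) then G (K \<omega>) else 0)" using K[OF w] fin by simp
    finally show "(if Pt \<omega> \<le> F (K \<omega>) then G (K \<omega>) else 0) = (\<Sum>k\<in>S. G k * indicator (Cs k \<inter> Ds k) \<omega>)" by simp
  qed
  have R: "integrable M (\<lambda>\<omega>. F (K \<omega>) * G (K \<omega>)) \<and>
    integral\<^sup>L M (\<lambda>\<omega>. F (K \<omega>) * G (K \<omega>)) = (\<Sum>k\<in>S. (F k * G k) * prob (Ds k))"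
  proof (rule ind_sum_int[OF fm fin])
    fix k assume "k \<in> S" then show "Ds k \<in> events" using Dev by blast
  next
    fix \<omega> assume w: "\<omega> \<in> space M"
    have "(\<Sum>k\<in>S. (F k * G k) * indicator (Ds k) \<omega>) = (\<Sum>k\<in>S. if K \<omega> = k then F k * G k else 0)"
      using w by (intro sum.cong) (auto simp: indicator_def Ds_def)
    also have "\<dots> = F (K \<omega>) * G (K \<omega>)" using K[OF w] fin by simp
    finally show "F (K \<omega>) * G (K \<omega>) = (\<Sum>k\<in>S. (F k * G k) * indicator (Ds k) \<omega>)" by simp
  qed
  show "integrable M (\<lambda>\<omega>. if Pt \<omega> \<le> F (K \<omega>) then G (K \<omega>) else 0)" using L by blast
  show "integrable M (\<lambda>\<omega>. F (K \<omega>) * G (K \<omega>))" using R by blast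
  have "(\<Sum>k\<in>S. G k * prob (Cs k \<inter> Ds k)) \<le> (\<Sum>k\<in>S. (F k * G k) * prob (Ds k))"
  proof (rule sum_mono)
    fix k assume k: "k \<in> S"
    have pc: "prob (Cs k) \<le> F k"
    proof (cases "F k \<le> 1")
      case True then show ?thesis unfolding Cs_def using su F by blast
    next
      case False then show ?thesis using prob_le_1[of "Cs k"] by linarith
    qed
    have "prob (Cs k \<inter> Ds k) = prob (Cs k) * prob (Ds k)"
      using indep_setD[OF ind CA DB[OF k]] .
    also have "\<dots> \<le> F k * prob (Ds k)" by (rule mult_right_mono[OF pc]) simp
    finally have "prob (Cs k \<inter> Ds k) \<le> F k * prob (Ds k)" .
    then have "G k * prob (Cs k \<inter> Ds k) \<le> G k * (F k * prob (Ds k))" by (rule mult_left_mono) (rule G)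
    then show "G k * prob (Cs k \<inter> Ds k) \<le> (F k * G k) * prob (Ds k)" by (simp add: ac_simps)
  qed
  then show "(\<integral>\<omega>. (if Pt \<omega> \<le> F (K \<omega>) then G (K \<omega>) else 0) \<partial>M) \<le> (\<integral>\<omega>. F (K \<omega>) * G (K \<omega>) \<partial>M)"
    using L R by simp
qed



definition Rfun :: "(nat \<Rightarrow> (nat \<Rightarrow> bool) \<Rightarrow> real) \<Rightarrow> nat \<Rightarrow> (nat \<Rightarrow> bool) \<Rightarrow> real" where
  "Rfun u T h = (\<Sum>s\<in>{1..T}. if h s then u s (restr (s - 1) h) else 0)"

lemma R_Rfun: "R_u al w u p T = Rfun u T (rej_hist al w u p T)"
  unfolding R_u_def Rfun_def
proof (rule sum.cong)
  fix s assume s: "s \<in> {1..T}"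
  then have "rej al w u p s = rej_hist al w u p T s" by (intro rej_T) auto
  moreover have "rej_hist al w u p (s - 1) = restr (s - 1) (rej_hist al w u p T)"
    using s by (intro rh_restr) auto
  ultimately show "(if rej al w u p s then u s (rej_hist al w u p (s - 1)) else 0) =
     (if rej_hist al w u p T s then u s (restr (s - 1) (rej_hist al w u p T)) else 0)" by simp
qed simp

lemma wealth_sum: "wealth W0 phi psi al w u p n = W0 + (\<Sum>t\<in>{1..n}.
    (if rej al w u p t then psi t (rej_hist al w u p (t - 1)) else 0) - phi t (rej_hist al w u p (t - 1)))"
proof (induction n)
  case 0 then show ?case by simp
next
  case (Suc n)
  have "wealth W0 phi psi al w u p (Suc n) = wealth W0 phi psi al w u p n - phi (Suc n) (rej_hist al w u p n)
     + (if rej al w u p (Suc n) then psi (Suc n) (rej_hist al w u p n) else 0)"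
    by (simp only: wealth.simps)
  then show ?case using Suc.IH by simp
qed

lemma R_u_mono:
  assumes nn: "\<And>t h. t \<ge> 1 \<Longrightarrow> 0 \<le> al t h" "\<And>t h. t \<ge> 1 \<Longrightarrow> 0 \<le> w t h" "\<And>t h. t \<ge> 1 \<Longrightarrow> 0 < u t h"
    and m: "monotone_pred al" "monotone_pred w" "monotone_pred u"
    and le: "\<And>s. s \<ge> 1 \<Longrightarrow> q s \<le> p s"
  shows "R_u al w u p T \<le> R_u al w u q T"
  unfolding R_u_def
proof (rule sum_mono)
  fix s assume s: "s \<in> {1..T}"
  have nn3: "\<And>t h. t \<ge> 1 \<Longrightarrow> 0 \<le> u t h" using nn(3) less_imp_le by blast
  have rm: "\<And>n r. rej_hist al w u p n r \<Longrightarrow> rej_hist al w u q n r"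
    by (rule rh_mono[where al=al and w=w and u=u and p=p and q=q]) (use nn nn3 m le in auto)
  have r: "rej al w u p s \<Longrightarrow> rej al w u q s" unfolding rej_def by (rule rm)
  have "\<forall>r\<in>{1..<s}. rej_hist al w u p (s - 1) r \<longrightarrow> rej_hist al w u q (s - 1) r" using rm by blast
  then have uu: "u s (rej_hist al w u p (s - 1)) \<le> u s (rej_hist al w u q (s - 1))"
    using monoD[OF m(3)] s by auto
  show "(if rej al w u p s then u s (rej_hist al w u p (s - 1)) else 0)
     \<le> (if rej al w u q s then u s (rej_hist al w u q (s - 1)) else 0)"
    using r uu less_imp_le[OF nn(3)[of s "rej_hist al w u q (s - 1)"]] s by auto
qed



definition cfun :: "real \<Rightarrow> real \<Rightarrow> (nat \<Rightarrow> (nat \<Rightarrow> bool) \<Rightarrow> real) \<Rightarrow> (nat \<Rightarrow> (nat \<Rightarrow> bool) \<Rightarrow> real)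
    \<Rightarrow> (nat \<Rightarrow> (nat \<Rightarrow> bool) \<Rightarrow> real) \<Rightarrow> (nat \<Rightarrow> (nat \<Rightarrow> bool) \<Rightarrow> real) \<Rightarrow> (nat \<Rightarrow> (nat \<Rightarrow> bool) \<Rightarrow> real)
    \<Rightarrow> nat \<Rightarrow> (nat \<Rightarrow> bool) \<Rightarrow> real" where
  "cfun a W0 al w u phi psi t h = (if al t h \<noteq> 0 then max 0 (phi t h) / (al t h * u t h * w t h)
      else max 0 (u t h + psi t h - u t h * b_coef a W0 u t h))"

definition Efun where
  "Efun a W0 al w u phi psi p t = (if rej al w u p t then cfun a W0 al w u phi psi t (rej_hist al w u p (t - 1)) else 0)
      - phi t (rej_hist al w u p (t - 1))"

lemma wealth_nonneg:
  assumes W0: "0 \<le> W0"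
    and phi_le: "\<And>t. t \<ge> 1 \<Longrightarrow> phi t (rej_hist al w u p (t - 1)) \<le> wealth W0 phi psi al w u p (t - 1)"
    and psi_nonneg: "\<And>t. t \<ge> 1 \<Longrightarrow> 0 \<le> psi t (rej_hist al w u p (t - 1))"
  shows "0 \<le> wealth W0 phi psi al w u p n"
proof (induction n)
  case 0 then show ?case using W0 by simp
next
  case (Suc n)
  have "wealth W0 phi psi al w u p (Suc n) = wealth W0 phi psi al w u p n - phi (Suc n) (rej_hist al w u p n)
     + (if rej al w u p (Suc n) then psi (Suc n) (rej_hist al w u p n) else 0)"
    by (simp only: wealth.simps)
  moreover have "phi (Suc n) (rej_hist al w u p n) \<le> wealth W0 phi psi al w u p n" using phi_le[of "Suc n"] by simp
  moreover have "0 \<le> psi (Suc n) (rej_hist al w u p n)" using psi_nonneg[of "Suc n"] by simp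
  ultimately show ?case by simp
qed

lemma pointwise:
  assumes a_pos: "0 < a" and W0_range: "0 \<le> W0" "W0 \<le> a"
    and u_pos: "\<And>t h. t \<ge> 1 \<Longrightarrow> 0 < u t h"
    and phi_nonneg: "\<And>t. t \<ge> 1 \<Longrightarrow> 0 \<le> phi t (rej_hist al w u p (t - 1))"
    and psi_le1: "\<And>t. t \<ge> 1 \<Longrightarrow> psi t (rej_hist al w u p (t - 1)) \<le> phi t (rej_hist al w u p (t - 1))
        + u t (rej_hist al w u p (t - 1)) * b_coef a W0 u t (rej_hist al w u p (t - 1))"
    and psi_le2: "\<And>t. t \<ge> 1 \<Longrightarrow> al t (rej_hist al w u p (t - 1)) \<noteq> 0 \<Longrightarrow>
        psi t (rej_hist al w u p (t - 1)) \<le> phi t (rej_hist al w u p (t - 1)) /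
         (u t (rej_hist al w u p (t - 1)) * w t (rej_hist al w u p (t - 1)) * al t (rej_hist al w u p (t - 1)))
        + u t (rej_hist al w u p (t - 1)) * b_coef a W0 u t (rej_hist al w u p (t - 1)) - u t (rej_hist al w u p (t - 1))"
  shows "V_u H0 al w u p T + wealth W0 phi psi al w u p T \<le> a * max (R_u al w u p T) 1
      + (\<Sum>t\<in>{1..T}. if t \<in> H0 then Efun a W0 al w u phi psi p t else 0)"
proof -
  define r where "r t = rej al w u p t" for t
  define h where "h t = rej_hist al w u p (t - 1)" for t
  define B where "B t = (if r t then u t (h t) * b_coef a W0 u t (h t) else 0)" for t
  define trm where "trm t = (if r t \<and> t \<in> H0 then u t (h t) else 0) + ((if r t then psi t (h t) else 0) - phi t (h t))" for t
  have VW: "V_u H0 al w u p T + wealth W0 phi psi al w u p T = W0 + (\<Sum>t\<in>{1..T}. trm t)"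
    unfolding V_u_def wealth_sum trm_def r_def h_def sum.distrib by simp
  have tb: "trm t \<le> B t + (if t \<in> H0 then Efun a W0 al w u phi psi p t else 0)" if t: "t \<in> {1..T}" for t
  proof -
    have t1: "t \<ge> 1" using t by simp
    note ph = phi_nonneg[OF t1] and p1 = psi_le1[OF t1] and p2 = psi_le2[OF t1]
    have up: "0 < u t (h t)" using u_pos t1 by simp
    show ?thesis
    proof (cases "t \<in> H0")
      case False
      then show ?thesis using ph p1 unfolding trm_def B_def h_def r_def by auto
    next
      case True
      show ?thesis
      proof (cases "r t")
        case False
        then show ?thesis using True unfolding trm_def B_def Efun_def r_def[symmetric] h_def[symmetric] by simp
      next
        case rt: True
        show ?thesis
        proof (cases "al t (h t) = 0")
          case True
          then show ?thesis using rt \<open>t \<in> H0\<close> unfolding trm_def B_def Efun_def cfun_def r_def[symmetric] h_def[symmetric]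
            by simp
        next
          case False
          have eqm: "u t (h t) * w t (h t) * al t (h t) = al t (h t) * u t (h t) * w t (h t)" by (simp add: ac_simps)
          have p2': "psi t (h t) \<le> phi t (h t) / (u t (h t) * w t (h t) * al t (h t))
                + u t (h t) * b_coef a W0 u t (h t) - u t (h t)"
            using p2 False unfolding h_def by simp
          have mx: "max 0 (phi t (h t)) = phi t (h t)" using ph unfolding h_def by simp
          have "psi t (h t) \<le> max 0 (phi t (h t)) / (al t (h t) * u t (h t) * w t (h t))
                + u t (h t) * b_coef a W0 u t (h t) - u t (h t)"
            using p2' unfolding eqm mx .
          then show ?thesis using rt \<open>t \<in> H0\<close> False unfolding trm_def B_def Efun_def cfun_def r_def[symmetric] h_def[symmetric]
            by simp
        qed
      qed
    qed
  qed
  have sB: "W0 + (\<Sum>t\<in>{1..T}. B t) \<le> a * max (R_u al w u p T) 1"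
  proof -
    have Bt: "B t = a * (if r t then u t (h t) else 0) - W0 * (if r t \<and> no_rej_before (h t) t then 1 else 0)"
      if t: "t \<in> {1..T}" for t
    proof -
      have "0 < u t (h t)" using u_pos[of t "h t"] t by simp
      then have "u t (h t) \<noteq> 0" by simp
      then have "u t (h t) * b_coef a W0 u t (h t) = a * u t (h t) - W0 * (if no_rej_before (h t) t then 1 else 0)"
        unfolding b_coef_def by (simp add: right_diff_distrib)
      then show ?thesis unfolding B_def by simp
    qed
    have R: "R_u al w u p T = (\<Sum>t\<in>{1..T}. if r t then u t (h t) else 0)" unfolding R_u_def r_def h_def ..
    have sumB: "(\<Sum>t\<in>{1..T}. B t) = a * R_u al w u p T - W0 * (\<Sum>t\<in>{1..T}. if r t \<and> no_rej_before (h t) t then 1 else 0)"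
      unfolding R by (simp add: Bt sum_subtractf sum_distrib_left)
    show ?thesis
    proof (cases "\<exists>t\<in>{1..T}. r t")
      case False
      then have "R_u al w u p T = 0" unfolding R by simp
      moreover have "(\<Sum>t\<in>{1..T}. B t) = 0" using False unfolding B_def by simp
      ultimately show ?thesis using W0_range by simp
    next
      case True
      define t0 where "t0 = (LEAST t. t \<in> {1..T} \<and> r t)"
      have t0: "t0 \<in> {1..T} \<and> r t0" using True unfolding t0_def by (metis (mono_tags, lifting) LeastI)
      have t0min: "\<And>s. s \<in> {1..T} \<Longrightarrow> r s \<Longrightarrow> t0 \<le> s" unfolding t0_def by (simp add: Least_le)
      have nrb: "no_rej_before (h t0) t0"
        unfolding no_rej_before_def h_def
      proof
        fix s assume s: "s \<in> {1..<t0}"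
        show "\<not> rej_hist al w u p (t0 - 1) s"
        proof
          assume "rej_hist al w u p (t0 - 1) s"
          then have "r s" and "1 \<le> s" and "s \<le> t0 - 1" unfolding r_def by (auto simp: rh_char)
          then show False using t0min[of s] t0 s by auto
        qed
      qed
      have "1 \<le> (\<Sum>t\<in>{1..T}. if r t \<and> no_rej_before (h t) t then 1 else (0::real))"
      proof -
        have "(if r t0 \<and> no_rej_before (h t0) t0 then 1 else (0::real)) \<le> (\<Sum>t\<in>{1..T}. if r t \<and> no_rej_before (h t) t then 1 else 0)"
          by (rule member_le_sum) (use t0 in auto)
        then show ?thesis using t0 nrb by simp
      qed
      then have "W0 \<le> W0 * (\<Sum>t\<in>{1..T}. if r t \<and> no_rej_before (h t) t then 1 else (0::real))"
        using W0_range mult_left_mono[of 1 _ W0] by simp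
      moreover have "a * R_u al w u p T \<le> a * max (R_u al w u p T) 1" using a_pos by simp
      ultimately show ?thesis unfolding sumB by simp
    qed
  qed
  have "(\<Sum>t\<in>{1..T}. trm t) \<le> (\<Sum>t\<in>{1..T}. B t + (if t \<in> H0 then Efun a W0 al w u phi psi p t else 0))"
    by (rule sum_mono) (rule tb)
  then show ?thesis unfolding VW sum.distrib using sB by simp
qed



theorem theorem3:
  fixes M :: "'a measure" and P :: "nat \<Rightarrow> 'a \<Rightarrow> real" and H0 :: "nat set"
    and a W0 :: real
    and al w u phi psi :: "nat \<Rightarrow> (nat \<Rightarrow> bool) \<Rightarrow> real"
    and T :: nat
  assumes prob: "prob_space M"
    and a_range: "0 < a" "a < 1"
    and W0_range: "0 \<le> W0" "W0 \<le> a"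
    and P_meas: "\<And>t. P t \<in> borel_measurable M"
    and P_range: "\<And>t \<omega>. \<omega> \<in> space M \<Longrightarrow> 0 \<le> P t \<omega> \<and> P t \<omega> \<le> 1"
    and H0_sub: "H0 \<subseteq> {1..}"
    and superunif: "\<And>t x. t \<in> H0 \<Longrightarrow> 0 \<le> x \<Longrightarrow> x \<le> 1 \<Longrightarrow>
                      measure M {\<omega> \<in> space M. P t \<omega> \<le> x} \<le> x"
    and indep: "\<And>t. t \<in> H0 \<Longrightarrow>
                  prob_space.indep_set M
                    (sigma_sets (space M) {P t -` A \<inter> space M | A. A \<in> sets borel})
                    (sigma_sets (space M)
                       {P s -` A \<inter> space M | s A. s \<in> {1..} - {t} \<and> A \<in> sets borel})"
    and al_nonneg: "\<And>t h. t \<ge> 1 \<Longrightarrow> 0 \<le> al t h"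
    and w_pos: "\<And>t h. t \<ge> 1 \<Longrightarrow> 0 < w t h"
    and u_pos: "\<And>t h. t \<ge> 1 \<Longrightarrow> 0 < u t h"
    and al_mono: "monotone_pred al"
    and w_mono: "monotone_pred w"
    and u_mono: "monotone_pred u"
    and phi_nonneg: "\<And>t \<omega>. t \<ge> 1 \<Longrightarrow> \<omega> \<in> space M \<Longrightarrow>
                       0 \<le> phi t (rej_hist al w u (\<lambda>s. P s \<omega>) (t - 1))"
    and phi_le: "\<And>t \<omega>. t \<ge> 1 \<Longrightarrow> \<omega> \<in> space M \<Longrightarrow>
                   phi t (rej_hist al w u (\<lambda>s. P s \<omega>) (t - 1))
                     \<le> wealth W0 phi psi al w u (\<lambda>s. P s \<omega>) (t - 1)"
    and psi_nonneg: "\<And>t \<omega>. t \<ge> 1 \<Longrightarrow> \<omega> \<in> space M \<Longrightarrow>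
                       0 \<le> psi t (rej_hist al w u (\<lambda>s. P s \<omega>) (t - 1))"
    and psi_le1: "\<And>t \<omega>. t \<ge> 1 \<Longrightarrow> \<omega> \<in> space M \<Longrightarrow>
                    (let h = rej_hist al w u (\<lambda>s. P s \<omega>) (t - 1) in
                       psi t h \<le> phi t h + u t h * b_coef a W0 u t h)"
    and psi_le2: "\<And>t \<omega>. t \<ge> 1 \<Longrightarrow> \<omega> \<in> space M \<Longrightarrow>
                    (let h = rej_hist al w u (\<lambda>s. P s \<omega>) (t - 1) in
                       al t h \<noteq> 0 \<longrightarrow>
                       psi t h \<le> phi t h / (u t h * w t h * al t h)
                                   + u t h * b_coef a W0 u t h - u t h)"
  shows "(\<integral>\<omega>. (V_u H0 al w u (\<lambda>s. P s \<omega>) T + wealth W0 phi psi al w u (\<lambda>s. P s \<omega>) T)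
               / max (R_u al w u (\<lambda>s. P s \<omega>) T) 1 \<partial>M) \<le> a
       \<and> (\<integral>\<omega>. V_u H0 al w u (\<lambda>s. P s \<omega>) T / max (R_u al w u (\<lambda>s. P s \<omega>) T) 1 \<partial>M) \<le> a"
proof -
  interpret prob_space M by (rule prob)
  define Hs where "Hs n = {h::nat\<Rightarrow>bool. \<forall>s. h s \<longrightarrow> s \<in> {1..n}}" for n
  define thr where "thr t h = al t h * u t h * w t h" for t h
  define c where "c = cfun a W0 al w u phi psi"
  define D where "D \<omega> = max (R_u al w u (\<lambda>s. P s \<omega>) T) 1" for \<omega>
  define E where "E t \<omega> = Efun a W0 al w u phi psi (\<lambda>s. P s \<omega>) t" for t \<omega>
  define N where "N = {t\<in>{1..T}. t \<in> H0}"
  define g where "g \<omega> = a + (\<Sum>t\<in>N. E t \<omega> / D \<omega>)" for \<omega>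
  have Dpos: "1 \<le> D \<omega>" for \<omega> by (simp add: D_def)
  have finH: "finite (Hs n)" for n unfolding Hs_def by (rule finite_Hs)
  have HinHs: "rej_hist al w u q n \<in> Hs n" for q n unfolding Hs_def by (rule rh_in_Hs)
  have Pset: "{\<omega>\<in>space M. P s \<omega> \<le> x} \<in> sets M" for s x
  proof -
    have "{\<omega>\<in>space M. P s \<omega> \<le> x} = P s -` {..x} \<inter> space M" by auto
    also have "\<dots> \<in> sets M" by (rule measurable_sets[OF P_meas atMost_borel])
    finally show ?thesis .
  qed
  have Hset: "{\<omega>\<in>space M. rej_hist al w u (\<lambda>s. P s \<omega>) n = h} \<in> sets M" for n h
    by (rule rh_sets[OF sets.sigma_algebra_axioms]) (rule Pset)
  have thr_nn: "0 \<le> thr t h" if "1 \<le> t" for t h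
    using al_nonneg[OF that, of h] u_pos[OF that, of h] w_pos[OF that, of h] unfolding thr_def by simp
  have c_nn: "0 \<le> c t h" if "1 \<le> t" for t h
    using thr_nn[OF that, of h] unfolding c_def cfun_def thr_def[symmetric] by simp
  have pert: "integrable M (\<lambda>\<omega>. E t \<omega> / D \<omega>) \<and> (\<integral>\<omega>. E t \<omega> / D \<omega> \<partial>M) \<le> 0" if tN: "t \<in> N" for t
  proof -
    from tN have t1: "1 \<le> t" "t \<le> T" "t \<in> H0" by (auto simp: N_def)
    define Q where "Q s \<omega> = (if s = t then 0 else P s \<omega>)" for s \<omega>
    define K where "K \<omega> = rej_hist al w u (\<lambda>s. Q s \<omega>) T" for \<omega>
    define A0 where "A0 = sigma_sets (space M) {P t -` A \<inter> space M | A. A \<in> sets borel}"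
    define B0 where "B0 = sigma_sets (space M) {P s -` A \<inter> space M | s A. s \<in> {1..} - {t} \<and> A \<in> sets borel}"
    have ind: "indep_set A0 B0" using indep[OF t1(3)] unfolding A0_def B0_def .
    have PA: "{\<omega>\<in>space M. P t \<omega> \<le> x} \<in> A0" for x
    proof -
      have "{\<omega>\<in>space M. P t \<omega> \<le> x} = P t -` {..x} \<inter> space M" by auto
      also have "\<dots> \<in> A0" unfolding A0_def
        by (rule sigma_sets.Basic) (use atMost_borel[of x] in blast)
      finally show ?thesis .
    qed
    have saB: "sigma_algebra (space M) B0" unfolding B0_def by (rule sigma_algebra_sigma_sets) auto
    have QB: "{\<omega>\<in>space M. Q s \<omega> \<le> x} \<in> B0" if s1: "s \<ge> 1" for s x
    proof (cases "s = t")
      case st: True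
      show ?thesis
      proof (cases "0 \<le> x")
        case True
        then have e: "{\<omega>\<in>space M. Q s \<omega> \<le> x} = space M" using st by (auto simp: Q_def)
        show ?thesis unfolding B0_def by (subst e) (rule sigma_sets_top)
      next
        case False
        then have e: "{\<omega>\<in>space M. Q s \<omega> \<le> x} = {}" using st by (auto simp: Q_def)
        show ?thesis unfolding B0_def by (subst e) (rule sigma_sets.Empty)
      qed
    next
      case False
      have "{\<omega>\<in>space M. Q s \<omega> \<le> x} = P s -` {..x} \<inter> space M" using False by (auto simp: Q_def)
      also have "\<dots> \<in> B0" unfolding B0_def
        by (rule sigma_sets.Basic) (use atMost_borel[of x] False s1 in blast)
      finally show ?thesis .
    qed
    have KB: "{\<omega>\<in>space M. K \<omega> = k} \<in> B0" for k unfolding K_def by (rule rh_sets[OF saB]) (rule QB)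
    have KS: "K \<omega> \<in> Hs T" for \<omega> unfolding K_def by (rule HinHs)
    define Fk where "Fk k = thr t (restr (t - 1) k)" for k
    define Gk where "Gk k = c t (restr (t - 1) k) / max (Rfun u T k) 1" for k
    have Fnn: "0 \<le> Fk k" for k unfolding Fk_def by (rule thr_nn[OF t1(1)])
    have Gnn: "0 \<le> Gk k" for k unfolding Gk_def using c_nn[OF t1(1)] by simp
    have su: "\<And>x. 0 \<le> x \<Longrightarrow> x \<le> 1 \<Longrightarrow> measure M {\<omega>\<in>space M. P t \<omega> \<le> x} \<le> x"
      using superunif[OF t1(3)] by blast
    note cr = core[OF prob ind PA finH KS KB su Fnn Gnn]
    obtain n where tn: "t = Suc n" using t1 by (cases t) auto
    have Hrel: "rej_hist al w u (\<lambda>s. P s \<omega>) (t - 1) = restr (t - 1) (K \<omega>)" for \<omega>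
    proof -
      have "rej_hist al w u (\<lambda>s. P s \<omega>) (t - 1) = rej_hist al w u (\<lambda>s. Q s \<omega>) (t - 1)"
        by (rule rh_local) (auto simp: Q_def)
      also have "\<dots> = restr (t - 1) (K \<omega>)" unfolding K_def using t1 by (intro rh_restr) auto
      finally show ?thesis .
    qed
    have rejt: "rej al w u (\<lambda>s. P s \<omega>) t = (P t \<omega> \<le> Fk (K \<omega>))" for \<omega>
    proof -
      have "rej al w u (\<lambda>s. P s \<omega>) t = (P t \<omega> \<le> thr t (rej_hist al w u (\<lambda>s. P s \<omega>) (t - 1)))"
        using rej_Suc[of al w u "\<lambda>s. P s \<omega>" n] unfolding tn thr_def by simp
      then show ?thesis unfolding Fk_def Hrel .
    qed
    define LF where "LF \<omega> = (if rej al w u (\<lambda>s. P s \<omega>) t then c t (rej_hist al w u (\<lambda>s. P s \<omega>) (t - 1)) else 0) / D \<omega>" for \<omega>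
    define PF where "PF \<omega> = phi t (rej_hist al w u (\<lambda>s. P s \<omega>) (t - 1)) / D \<omega>" for \<omega>
    have LFeq: "LF \<omega> = (if P t \<omega> \<le> Fk (K \<omega>) then Gk (K \<omega>) else 0)" if w: "\<omega> \<in> space M" for \<omega>
    proof (cases "rej al w u (\<lambda>s. P s \<omega>) t")
      case True
      have Qe: "(\<lambda>s. Q s \<omega>) = (\<lambda>s. P s \<omega>)(t := 0)" by (rule ext) (simp add: Q_def)
      have "K \<omega> = rej_hist al w u (\<lambda>s. P s \<omega>) T" unfolding K_def Qe
        by (rule rh_zero[OF _ t1(1) True]) (rule thr_nn[unfolded thr_def])
      then have "D \<omega> = max (Rfun u T (K \<omega>)) 1" unfolding D_def by (simp add: R_Rfun)
      then show ?thesis using True unfolding LF_def Gk_def rejt[symmetric] Hrel by simp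
    next
      case False
      then show ?thesis unfolding LF_def rejt[symmetric] by simp
    qed
    have RHle: "Fk (K \<omega>) * Gk (K \<omega>) \<le> PF \<omega>" if w: "\<omega> \<in> space M" for \<omega>
    proof -
      define hh where "hh = rej_hist al w u (\<lambda>s. P s \<omega>) (t - 1)"
      have hhK: "restr (t - 1) (K \<omega>) = hh" unfolding hh_def Hrel ..
      have ph: "0 \<le> phi t hh" unfolding hh_def using phi_nonneg[OF t1(1) w] .
      have tc: "thr t hh * c t hh \<le> phi t hh"
      proof (cases "al t hh = 0")
        case True then show ?thesis using ph unfolding thr_def by simp
      next
        case False
        have "0 < thr t hh" using thr_nn[OF t1(1), of hh] False al_nonneg[OF t1(1), of hh]
            u_pos[OF t1(1), of hh] w_pos[OF t1(1), of hh] unfolding thr_def by simp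
        then show ?thesis using False ph unfolding c_def cfun_def thr_def[symmetric] by simp
      qed
      have tcnn: "0 \<le> thr t hh * c t hh" using thr_nn[OF t1(1)] c_nn[OF t1(1)] by simp
      have DK: "max (Rfun u T (K \<omega>)) 1 = max (R_u al w u (\<lambda>s. Q s \<omega>) T) 1"
        unfolding K_def by (simp add: R_Rfun)
      have "R_u al w u (\<lambda>s. P s \<omega>) T \<le> R_u al w u (\<lambda>s. Q s \<omega>) T"
      proof (rule R_u_mono[OF al_nonneg _ u_pos al_mono w_mono u_mono])
        show "0 \<le> w t h" if "1 \<le> t" for t h using w_pos[OF that, of h] by simp
        show "Q s \<omega> \<le> P s \<omega>" for s using P_range[OF w, of s] by (cases "s = t") (auto simp: Q_def)
      qed
      then have DD: "D \<omega> \<le> max (Rfun u T (K \<omega>)) 1" unfolding DK D_def by simp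
      have "Fk (K \<omega>) * Gk (K \<omega>) = thr t hh * c t hh / max (Rfun u T (K \<omega>)) 1"
        unfolding Fk_def Gk_def hhK by simp
      also have "\<dots> \<le> thr t hh * c t hh / D \<omega>"
        by (rule divide_left_mono[OF DD tcnn]) (use Dpos[of \<omega>] in simp)
      also have "\<dots> \<le> phi t hh / D \<omega>"
        by (rule divide_right_mono[OF tc]) (use Dpos[of \<omega>] in simp)
      finally show ?thesis unfolding PF_def hh_def .
    qed
    have LFint: "integrable M LF"
      using cr(1) LFeq by (subst Bochner_Integration.integrable_cong[OF refl]) auto
    have LFI: "integral\<^sup>L M LF = (\<integral>\<omega>. (if P t \<omega> \<le> Fk (K \<omega>) then Gk (K \<omega>) else 0) \<partial>M)"
      using LFeq by (intro Bochner_Integration.integral_cong) auto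
    have PFint: "integrable M PF"
    proof -
      have "integrable M (\<lambda>\<omega>. (\<lambda>k. phi t (restr (t - 1) k) / max (Rfun u T k) 1) (rej_hist al w u (\<lambda>s. P s \<omega>) T))"
        by (rule fn_int[OF finite_measure_axioms finH HinHs Hset])
      moreover have "PF = (\<lambda>\<omega>. (\<lambda>k. phi t (restr (t - 1) k) / max (Rfun u T k) 1) (rej_hist al w u (\<lambda>s. P s \<omega>) T))"
      proof (rule ext)
        fix \<omega>
        have "rej_hist al w u (\<lambda>s. P s \<omega>) (t - 1) = restr (t - 1) (rej_hist al w u (\<lambda>s. P s \<omega>) T)"
          by (rule rh_restr) (use t1 in simp)
        then show "PF \<omega> = (\<lambda>k. phi t (restr (t - 1) k) / max (Rfun u T k) 1) (rej_hist al w u (\<lambda>s. P s \<omega>) T)"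
          unfolding PF_def D_def R_Rfun by simp
      qed
      ultimately show ?thesis by simp
    qed
    have Eeq: "E t \<omega> / D \<omega> = LF \<omega> - PF \<omega>" for \<omega>
      unfolding E_def Efun_def LF_def PF_def c_def by (simp add: diff_divide_distrib)
    have "integral\<^sup>L M LF \<le> (\<integral>\<omega>. Fk (K \<omega>) * Gk (K \<omega>) \<partial>M)" unfolding LFI by (rule cr(3))
    also have "\<dots> \<le> integral\<^sup>L M PF" by (rule integral_mono[OF cr(2) PFint RHle])
    finally have "integral\<^sup>L M LF \<le> integral\<^sup>L M PF" .
    moreover have "integrable M (\<lambda>\<omega>. E t \<omega> / D \<omega>)" unfolding Eeq using LFint PFint by simp
    moreover have "(\<integral>\<omega>. E t \<omega> / D \<omega> \<partial>M) = integral\<^sup>L M LF - integral\<^sup>L M PF"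
      unfolding Eeq using LFint PFint by simp
    ultimately show ?thesis by simp
  qed
  have gint: "integrable M g" unfolding g_def using pert by auto
  have gI: "integral\<^sup>L M g \<le> a"
  proof -
    have "integral\<^sup>L M g = a + (\<Sum>t\<in>N. \<integral>\<omega>. E t \<omega> / D \<omega> \<partial>M)"
      unfolding g_def using pert by (simp add: Bochner_Integration.integral_sum prob_space)
    also have "\<dots> \<le> a + 0" using pert by (intro add_left_mono sum_nonpos) auto
    finally show ?thesis by simp
  qed
  have pw: "(V_u H0 al w u (\<lambda>s. P s \<omega>) T + wealth W0 phi psi al w u (\<lambda>s. P s \<omega>) T) / D \<omega> \<le> g \<omega>
     \<and> V_u H0 al w u (\<lambda>s. P s \<omega>) T / D \<omega> \<le> (V_u H0 al w u (\<lambda>s. P s \<omega>) T + wealth W0 phi psi al w u (\<lambda>s. P s \<omega>) T) / D \<omega>"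
    if w: "\<omega> \<in> space M" for \<omega>
  proof -
    have main: "V_u H0 al w u (\<lambda>s. P s \<omega>) T + wealth W0 phi psi al w u (\<lambda>s. P s \<omega>) T \<le> a * D \<omega>
      + (\<Sum>t\<in>{1..T}. if t \<in> H0 then E t \<omega> else 0)"
      unfolding D_def E_def
    proof (rule pointwise[OF a_range(1) W0_range u_pos])
      show "0 \<le> phi t (rej_hist al w u (\<lambda>s. P s \<omega>) (t - 1))" if "1 \<le> t" for t using phi_nonneg[OF that w] .
      show "psi t (rej_hist al w u (\<lambda>s. P s \<omega>) (t - 1)) \<le> phi t (rej_hist al w u (\<lambda>s. P s \<omega>) (t - 1))
        + u t (rej_hist al w u (\<lambda>s. P s \<omega>) (t - 1)) * b_coef a W0 u t (rej_hist al w u (\<lambda>s. P s \<omega>) (t - 1))"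
        if "1 \<le> t" for t using psi_le1[OF that w] by (simp add: Let_def)
      show "psi t (rej_hist al w u (\<lambda>s. P s \<omega>) (t - 1)) \<le> phi t (rej_hist al w u (\<lambda>s. P s \<omega>) (t - 1)) /
         (u t (rej_hist al w u (\<lambda>s. P s \<omega>) (t - 1)) * w t (rej_hist al w u (\<lambda>s. P s \<omega>) (t - 1)) * al t (rej_hist al w u (\<lambda>s. P s \<omega>) (t - 1)))
        + u t (rej_hist al w u (\<lambda>s. P s \<omega>) (t - 1)) * b_coef a W0 u t (rej_hist al w u (\<lambda>s. P s \<omega>) (t - 1)) - u t (rej_hist al w u (\<lambda>s. P s \<omega>) (t - 1))"
        if "1 \<le> t" "al t (rej_hist al w u (\<lambda>s. P s \<omega>) (t - 1)) \<noteq> 0" for t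
        using psi_le2[OF that(1) w] that(2) by (simp add: Let_def)
    qed
    have sN: "(\<Sum>t\<in>{1..T}. if t \<in> H0 then E t \<omega> else 0) = (\<Sum>t\<in>N. E t \<omega>)"
      unfolding N_def sum.inter_filter[OF finite_atLeastAtMost] ..
    have D0: "0 < D \<omega>" using Dpos[of \<omega>] by simp
    have "(V_u H0 al w u (\<lambda>s. P s \<omega>) T + wealth W0 phi psi al w u (\<lambda>s. P s \<omega>) T) / D \<omega>
        \<le> (a * D \<omega> + (\<Sum>t\<in>N. E t \<omega>)) / D \<omega>"
      using main sN D0 by (simp add: divide_right_mono)
    also have "\<dots> = g \<omega>" unfolding g_def using D0 by (simp add: add_divide_distrib sum_divide_distrib)
    finally have A1: "(V_u H0 al w u (\<lambda>s. P s \<omega>) T + wealth W0 phi psi al w u (\<lambda>s. P s \<omega>) T) / D \<omega> \<le> g \<omega>" .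
    have "0 \<le> wealth W0 phi psi al w u (\<lambda>s. P s \<omega>) T"
      by (rule wealth_nonneg[OF W0_range(1)]) (use phi_le[OF _ w] psi_nonneg[OF _ w] in auto)
    then have A2: "V_u H0 al w u (\<lambda>s. P s \<omega>) T / D \<omega> \<le> (V_u H0 al w u (\<lambda>s. P s \<omega>) T + wealth W0 phi psi al w u (\<lambda>s. P s \<omega>) T) / D \<omega>"
      using D0 by (simp add: divide_right_mono)
    show ?thesis using A1 A2 by simp
  qed
  have fin: "integral\<^sup>L M f \<le> a" if fle: "\<And>\<omega>. \<omega> \<in> space M \<Longrightarrow> f \<omega> \<le> g \<omega>" for f
  proof (cases "integrable M f")
    case True
    have "integral\<^sup>L M f \<le> integral\<^sup>L M g" by (rule integral_mono[OF True gint fle])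
    then show ?thesis using gI by simp
  next
    case False
    then show ?thesis using not_integrable_integral_eq[OF False] a_range by simp
  qed
  show ?thesis
  proof
    show "(\<integral>\<omega>. (V_u H0 al w u (\<lambda>s. P s \<omega>) T + wealth W0 phi psi al w u (\<lambda>s. P s \<omega>) T)
               / max (R_u al w u (\<lambda>s. P s \<omega>) T) 1 \<partial>M) \<le> a"
      by (rule fin) (use pw in \<open>auto simp: D_def\<close>)
    show "(\<integral>\<omega>. V_u H0 al w u (\<lambda>s. P s \<omega>) T / max (R_u al w u (\<lambda>s. P s \<omega>) T) 1 \<partial>M) \<le> a"
    proof (rule fin)
      fix \<omega> assume w: "\<omega> \<in> space M"
      show "V_u H0 al w u (\<lambda>s. P s \<omega>) T / max (R_u al w u (\<lambda>s. P s \<omega>) T) 1 \<le> g \<omega>"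
        using pw[OF w] unfolding D_def by linarith
    qed
  qed
qed

end
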